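(* Let $\mathcal{R}=(\mathcal{W},\mathcal{R}_1,\mathcal{R}_2)$ be a domino set with $\mathcal{W}=\{1,\dots,m\}$, and let $\mathcal{S}$ be the cyclic triomino set constructed from $\mathcal{R}$ as below (for any fixed $n\ge 2m+1$). Then the $\mathcal{S}$-cyclic triomino problem is solvable if and only if the $\mathcal{R}$-domino problem is solvable.
   Context: A domino set is $\mathcal{R}=(\mathcal{W},\mathcal{R}_1,\mathcal{R}_2)$ with $\mathcal{W}$ non-empty finite and $\mathcal{R}_1,\mathcal{R}_2\subset\mathcal{W}^2$. The $\mathcal{R}$-domino problem is solvable if there is $\mathcal{T}:\mathbb{Z}^2\to\mathcal{W}$ with $(\mathcal{T}(s),\mathcal{T}(s+e_i))\in\mathcal{R}_i$ for all $s\in\mathbb{Z}^2$, $i=1,2$, where $e_1=(1,0)$, $e_2=(0,1)$. Let $u_1=(1,0),u_2=(0,1),u_3=(-1,0),u_4=(0,-1)$, indices mod 4. Regard integers as elements of $\mathbb{Z}_n$. Let $L=\{(w,0,0): w\in\mathcal{W}\}$, $K_1=L\cup\{(0,b,a):(a,b)\in\mathcal{R}_1\}$, $K_2=L\cup\{(0,a,b):(a,b)\in\mathcal{R}_2\}$, $K_3=L\cup\{(0,a,b):(a,b)\in\mathcal{R}_1\}$, $K_4=L\cup\{(0,b,a):(a,b)\in\mathcal{R}_2\}$. Let $\mathcal{V}=\mathbb{Z}_n$, $\mathcal{S}_i=\{(a+k,b+k,c+k):(a,b,c)\in K_i, k\in\mathcal{V}\}$, $\mathcal{S}_{i+4}=\mathcal{S}_i$,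 and $\mathcal{S}=(\mathcal{V},\mathcal{S}_1,\dots,\mathcal{S}_4)$. The $\mathcal{S}$-cyclic triomino problem is solvable if there exists $\mathcal{T}:\mathbb{Z}^2\to\mathcal{V}$ with $(\mathcal{T}(s),\mathcal{T}(s+u_i),\mathcal{T}(s+u_{i+1}))\in\mathcal{S}_i$ for every $s\in\mathbb{Z}^2$ and $1\le i\le 4$. *)

theory Defs
  imports Main
begin

type_synonym cell = "int \<times> int"

definition vadd :: "cell \<Rightarrow> cell \<Rightarrow> cell" where
  "vadd s t = (fst s + fst t, snd s + snd t)"

definition domino_solvable :: "'a set \<Rightarrow> ('a \<times> 'a) set \<Rightarrow> ('a \<times> 'a) set \<Rightarrow> bool" where
  "domino_solvable W R1 R2 \<longleftrightarrow>
     (\<exists>T :: cell \<Rightarrow> 'a. (\<forall>s. T s \<in> W) \<and>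
        (\<forall>s. (T s, T (vadd s (1,0))) \<in> R1 \<and> (T s, T (vadd s (0,1))) \<in> R2))"

definition u :: "nat \<Rightarrow> cell" where
  "u i = (if i mod 4 = 1 then (1,0) else if i mod 4 = 2 then (0,1)
          else if i mod 4 = 3 then (-1,0) else (0,-1))"

(* Cyclic triomino problem: V = Z_n represented as {0..<n} *)
definition cyclic_triomino_solvable ::
  "nat \<Rightarrow> (nat \<Rightarrow> (int \<times> int \<times> int) set) \<Rightarrow> bool" where
  "cyclic_triomino_solvable n S \<longleftrightarrow>
     (\<exists>T :: cell \<Rightarrow> int. (\<forall>s. T s \<in> {0..<int n}) \<and>
        (\<forall>s. \<forall>i\<in>{1..4}. (T s, T (vadd s (u i)), T (vadd s (u (Suc i)))) \<in> S i))"

definition Lset :: "nat \<Rightarrow> (int \<times> int \<times> int) set" where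
  "Lset m = {(w,0,0) | w. w \<in> {1..int m}}"

definition Kset :: "nat \<Rightarrow> (int \<times> int) set \<Rightarrow> (int \<times> int) set \<Rightarrow> nat \<Rightarrow> (int \<times> int \<times> int) set" where
  "Kset m R1 R2 i =
     (if i = 1 then Lset m \<union> {(0,b,a) | a b. (a,b) \<in> R1}
      else if i = 2 then Lset m \<union> {(0,a,b) | a b. (a,b) \<in> R2}
      else if i = 3 then Lset m \<union> {(0,a,b) | a b. (a,b) \<in> R1}
      else Lset m \<union> {(0,b,a) | a b. (a,b) \<in> R2})"

definition Sset :: "nat \<Rightarrow> nat \<Rightarrow> (int \<times> int) set \<Rightarrow> (int \<times> int) set \<Rightarrow> nat \<Rightarrow> (int \<times> int \<times> int) set" where
  "Sset n m R1 R2 i =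
     {((a + k) mod int n, (b + k) mod int n, (c + k) mod int n) | a b c k.
        (a,b,c) \<in> Kset m R1 R2 (((i + 3) mod 4) + 1) \<and> k \<in> {0..<int n}}"

end

theory Submission
  imports Defs
begin

definition ab :: "nat \<Rightarrow> nat \<Rightarrow> int \<Rightarrow> int \<Rightarrow> bool" where
  "ab n m x y \<longleftrightarrow> (y - x) mod int n \<in> {1..int m}"

lemma ab_antisym:
  assumes "2*m+1 \<le> n" "ab n m x y" "ab n m y x" shows False
proof -
  have p: "(y - x) mod int n \<in> {1..int m}" and q: "(x - y) mod int n \<in> {1..int m}"
    using assms unfolding ab_def by auto
  have "((y - x) mod int n + (x - y) mod int n) mod int n = ((y-x) + (x-y)) mod int n"
    by (simp add: mod_add_eq)
  then have "int n dvd ((y - x) mod int n + (x - y) mod int n)" by (simp add: dvd_eq_mod_eq_0)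
  moreover have "(y - x) mod int n + (x - y) mod int n > 0" using p q by auto
  moreover have "(y - x) mod int n + (x - y) mod int n < int n" using p q assms(1) by auto
  ultimately show False using zdvd_imp_le by fastforce
qed

lemma idx: "i \<in> {1..4::nat} \<Longrightarrow> ((i + 3) mod 4) + 1 = i"
proof -
  assume "i \<in> {1..4::nat}"
  then have "i = 1 \<or> i = 2 \<or> i = 3 \<or> i = 4" by auto
  then show ?thesis by auto
qed

lemma memS:
  assumes i: "i \<in> {1..4}" and x: "0 \<le> x" "x < int n" and y: "0 \<le> y" "y < int n"
    and z: "0 \<le> z" "z < int n"
    and S: "(x,y,z) \<in> Sset n m R1 R2 i"
    and R1: "R1 \<subseteq> {1..int m} \<times> {1..int m}" and R2: "R2 \<subseteq> {1..int m} \<times> {1..int m}"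
    and nm: "2*m+1 \<le> n"
  shows "(z = y \<and> ab n m y x) \<or> (0, (y - x) mod int n, (z - x) mod int n) \<in> Kset m R1 R2 i"
proof -
  obtain a b c k where e: "(x,y,z) = ((a + k) mod int n, (b + k) mod int n, (c + k) mod int n)"
    and K: "(a,b,c) \<in> Kset m R1 R2 i" and k: "k \<in> {0..<int n}"
    using S unfolding Sset_def idx[OF i] by blast
  have km: "k mod int n = k" using k by simp
  show ?thesis
  proof (cases "(a,b,c) \<in> Lset m")
    case True
    then have abc: "b = 0" "c = 0" "a \<in> {1..int m}" unfolding Lset_def by auto
    then have "a < int n" using nm by auto
    then have "(x - y) mod int n = a" using e abc km
      by (simp add: mod_diff_left_eq)
    then have "ab n m y x" unfolding ab_def using abc by simp
    then show ?thesis using e abc by simp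
  next
    case False
    then have a0: "a = 0" and bc: "b \<in> {1..int m}" "c \<in> {1..int m}"
      using K R1 R2 unfolding Kset_def by (auto split: if_splits)
    have "x = k" using e a0 km by simp
    then have "(y - x) mod int n = b" "(z - x) mod int n = c" using e bc nm
      by (auto simp add: mod_diff_left_eq)
    then show ?thesis using K a0 by simp
  qed
qed

lemma Kset0:
  assumes "(0, y, z) \<in> Kset m R1 R2 i"
    and R1: "R1 \<subseteq> {1..int m} \<times> {1..int m}" and R2: "R2 \<subseteq> {1..int m} \<times> {1..int m}"
  shows "y \<in> {1..int m} \<and> z \<in> {1..int m}"
  using assms unfolding Kset_def Lset_def by (auto split: if_splits)

lemma parity_int:
  fixes g :: "int \<Rightarrow> bool"
  assumes "\<And>x. g (x + 1) = (\<not> g x)"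
  shows "g x = (g 0 \<noteq> odd x)"
proof (induction x rule: int_induct[where k=0])
  case base then show ?case by simp
next
  case (step1 i) then show ?case using assms[of i] by simp
next
  case (step2 i) then show ?case using assms[of "i - 1"] by simp
qed


lemma u_simps: "u 1 = (1,0)" "u 2 = (0,1)" "u 3 = (-1,0)" "u 4 = (0,-1)" "u (Suc 4) = (1,0)"
  "u (Suc 0) = (1,0)" "u (Suc (Suc 0)) = (0,1)" "u (Suc 1) = (0,1)" "u (Suc 2) = (-1,0)" "u (Suc 3) = (0,-1)" "u 5 = (1,0)"
  by (simp_all add: u_def)

context
  fixes n m :: nat and R1 R2 :: "(int \<times> int) set" and T :: "cell \<Rightarrow> int"
  assumes R1: "R1 \<subseteq> {1..int m} \<times> {1..int m}" and R2: "R2 \<subseteq> {1..int m} \<times> {1..int m}"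
    and nm: "2*m+1 \<le> n"
    and Tr: "\<forall>s. T s \<in> {0..<int n}"
    and Ts: "\<forall>s. \<forall>i\<in>{1..4}. (T s, T (vadd s (u i)), T (vadd s (u (Suc i)))) \<in> Sset n m R1 R2 i"
begin

lemma triple:
  assumes "i \<in> {1..4}"
  shows "(T (vadd s (u (Suc i))) = T (vadd s (u i)) \<and> ab n m (T (vadd s (u i))) (T s)) \<or>
    (0, (T (vadd s (u i)) - T s) mod int n, (T (vadd s (u (Suc i))) - T s) mod int n) \<in> Kset m R1 R2 i"
proof -
  have a: "T s \<in> {0..<int n}" "T (vadd s (u i)) \<in> {0..<int n}" "T (vadd s (u (Suc i))) \<in> {0..<int n}"
    using Tr by blast+
  have b: "(T s, T (vadd s (u i)), T (vadd s (u (Suc i)))) \<in> Sset n m R1 R2 i" using Ts assms by blast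
  show ?thesis using memS[OF assms _ _ _ _ _ _ b R1 R2 nm] a by simp
qed

lemma tripleR:
  assumes "(0, (T (vadd s (u i)) - T s) mod int n, (T (vadd s (u (Suc i))) - T s) mod int n) \<in> Kset m R1 R2 i"
  shows "ab n m (T s) (T (vadd s (u i))) \<and> ab n m (T s) (T (vadd s (u (Suc i))))"
  using Kset0[OF assms R1 R2] unfolding ab_def by auto

definition hi :: "cell \<Rightarrow> bool" where
  "hi s \<longleftrightarrow> ab n m (T (vadd s (u 1))) (T s)"

lemma hi_step:
  assumes "i \<in> {1..4}" "ab n m (T (vadd s (u i))) (T s)"
  shows "T (vadd s (u (Suc i))) = T (vadd s (u i)) \<and> ab n m (T (vadd s (u (Suc i)))) (T s)"
proof -
  have "\<not> ab n m (T s) (T (vadd s (u i)))" using ab_antisym[OF nm] assms(2) by blast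
  then show ?thesis using triple[OF assms(1), of s] tripleR[of s i] by auto
qed

lemma hiL:
  assumes "hi s" "i \<in> {1..4}"
  shows "T (vadd s (u (Suc i))) = T (vadd s (u i)) \<and> ab n m (T (vadd s (u i))) (T s)"
proof -
  have e: "Suc 1 = 2" "Suc 2 = 3" "Suc 3 = 4" by simp_all
  have r: "(1::nat) \<in> {1..4}" "(2::nat) \<in> {1..4}" "(3::nat) \<in> {1..4}" "(4::nat) \<in> {1..4}" by simp_all
  have a1: "ab n m (T (vadd s (u 1))) (T s)" using assms(1) unfolding hi_def by simp
  have s1: "T (vadd s (u 2)) = T (vadd s (u 1)) \<and> ab n m (T (vadd s (u 2))) (T s)"
    by (rule hi_step[of 1 s, unfolded e, OF r(1) a1])
  have s2: "T (vadd s (u 3)) = T (vadd s (u 2)) \<and> ab n m (T (vadd s (u 3))) (T s)"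
    by (rule hi_step[of 2 s, unfolded e, OF r(2) conjunct2[OF s1]])
  have s3: "T (vadd s (u 4)) = T (vadd s (u 3)) \<and> ab n m (T (vadd s (u 4))) (T s)"
    by (rule hi_step[of 3 s, unfolded e, OF r(3) conjunct2[OF s2]])
  have s4: "T (vadd s (u (Suc 4))) = T (vadd s (u 4)) \<and> ab n m (T (vadd s (u (Suc 4)))) (T s)"
    by (rule hi_step[of 4 s, OF r(4) conjunct2[OF s3]])
  have "i = 1 \<or> i = 2 \<or> i = 3 \<or> i = 4" using assms(2) by auto
  then show ?thesis
  proof (elim disjE)
    assume h: "i = 1" show ?thesis using a1 s1 unfolding h e by blast
  next
    assume h: "i = 2" show ?thesis using s1 s2 unfolding h e by blast
  next
    assume h: "i = 3" show ?thesis using s2 s3 unfolding h e by blast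
  next
    assume h: "i = 4" show ?thesis using s3 s4 unfolding h e by blast
  qed
qed

lemma lo_step:
  assumes "i \<in> {1..4}" "\<not> ab n m (T (vadd s (u i))) (T s)"
  shows "(0, (T (vadd s (u i)) - T s) mod int n, (T (vadd s (u (Suc i))) - T s) mod int n) \<in> Kset m R1 R2 i
     \<and> ab n m (T s) (T (vadd s (u i))) \<and> \<not> ab n m (T (vadd s (u (Suc i)))) (T s)"
proof -
  have K: "(0, (T (vadd s (u i)) - T s) mod int n, (T (vadd s (u (Suc i))) - T s) mod int n) \<in> Kset m R1 R2 i"
    using triple[OF assms(1), of s] assms(2) by blast
  then have "ab n m (T s) (T (vadd s (u i)))" "ab n m (T s) (T (vadd s (u (Suc i))))" using tripleR by auto
  then show ?thesis using K ab_antisym[OF nm] by blast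
qed

lemma loR:
  assumes "\<not> hi s" "i \<in> {1..4}"
  shows "(0, (T (vadd s (u i)) - T s) mod int n, (T (vadd s (u (Suc i))) - T s) mod int n) \<in> Kset m R1 R2 i
     \<and> ab n m (T s) (T (vadd s (u i)))"
proof -
  have e: "Suc 1 = 2" "Suc 2 = 3" "Suc 3 = 4" by simp_all
  have r: "(1::nat) \<in> {1..4}" "(2::nat) \<in> {1..4}" "(3::nat) \<in> {1..4}" "(4::nat) \<in> {1..4}" by simp_all
  have a1: "\<not> ab n m (T (vadd s (u 1))) (T s)" using assms(1) unfolding hi_def by simp
  have s1: "(0, (T (vadd s (u 1)) - T s) mod int n, (T (vadd s (u 2)) - T s) mod int n) \<in> Kset m R1 R2 1
     \<and> ab n m (T s) (T (vadd s (u 1))) \<and> \<not> ab n m (T (vadd s (u 2))) (T s)"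
    by (rule lo_step[of 1 s, unfolded e, OF r(1) a1])
  have s2: "(0, (T (vadd s (u 2)) - T s) mod int n, (T (vadd s (u 3)) - T s) mod int n) \<in> Kset m R1 R2 2
     \<and> ab n m (T s) (T (vadd s (u 2))) \<and> \<not> ab n m (T (vadd s (u 3))) (T s)"
    by (rule lo_step[of 2 s, unfolded e, OF r(2) conjunct2[OF conjunct2[OF s1]]])
  have s3: "(0, (T (vadd s (u 3)) - T s) mod int n, (T (vadd s (u 4)) - T s) mod int n) \<in> Kset m R1 R2 3
     \<and> ab n m (T s) (T (vadd s (u 3))) \<and> \<not> ab n m (T (vadd s (u 4))) (T s)"
    by (rule lo_step[of 3 s, unfolded e, OF r(3) conjunct2[OF conjunct2[OF s2]]])
  have s4: "(0, (T (vadd s (u 4)) - T s) mod int n, (T (vadd s (u (Suc 4))) - T s) mod int n) \<in> Kset m R1 R2 4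
     \<and> ab n m (T s) (T (vadd s (u 4)))"
    using lo_step[of 4 s, OF r(4) conjunct2[OF conjunct2[OF s3]]] by blast
  have "i = 1 \<or> i = 2 \<or> i = 3 \<or> i = 4" using assms(2) by auto
  then show ?thesis
  proof (elim disjE)
    assume h: "i = 1" show ?thesis using s1 unfolding h e by blast
  next
    assume h: "i = 2" show ?thesis using s2 unfolding h e by blast
  next
    assume h: "i = 3" show ?thesis using s3 unfolding h e by blast
  next
    assume h: "i = 4" show ?thesis using s4 unfolding h e by blast
  qed
qed

lemma hi_e1: "hi (vadd s (1,0)) = (\<not> hi s)"
proof -
  have v: "vadd (vadd s (u 1)) (u 3) = s" by (simp add: vadd_def u_simps)
  show ?thesis
  proof
    assume h: "hi (vadd s (1,0))"
    show "\<not> hi s"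
    proof
      assume "hi s"
      then have "ab n m (T (vadd s (u 1))) (T s)" using hiL[of s 1] by simp
      moreover have "ab n m (T s) (T (vadd s (u 1)))" using hiL[of "vadd s (u 1)" 3] h v u_simps by simp
      ultimately show False using ab_antisym[OF nm] by blast
    qed
  next
    assume h: "\<not> hi s"
    show "hi (vadd s (1,0))"
    proof (rule ccontr)
      assume h2: "\<not> hi (vadd s (1,0))"
      have "ab n m (T s) (T (vadd s (u 1)))" using loR[OF h, of 1] by simp
      moreover have "ab n m (T (vadd s (u 1))) (T s)" using loR[of "vadd s (u 1)" 3] h2 v u_simps by simp
      ultimately show False using ab_antisym[OF nm] by blast
    qed
  qed
qed

lemma hi_e2: "hi (vadd s (0,1)) = (\<not> hi s)"
proof -
  have v: "vadd (vadd s (u 2)) (u 4) = s" by (simp add: vadd_def u_simps)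
  show ?thesis
  proof
    assume h: "hi (vadd s (0,1))"
    show "\<not> hi s"
    proof
      assume "hi s"
      then have "ab n m (T (vadd s (u 2))) (T s)" using hiL[of s 2] by simp
      moreover have "ab n m (T s) (T (vadd s (u 2)))" using hiL[of "vadd s (u 2)" 4] h v u_simps by simp
      ultimately show False using ab_antisym[OF nm] by blast
    qed
  next
    assume h: "\<not> hi s"
    show "hi (vadd s (0,1))"
    proof (rule ccontr)
      assume h2: "\<not> hi (vadd s (0,1))"
      have "ab n m (T s) (T (vadd s (u 2)))" using loR[OF h, of 2] by simp
      moreover have "ab n m (T (vadd s (u 2))) (T s)" using loR[of "vadd s (u 2)" 4] h2 v u_simps by simp
      ultimately show False using ab_antisym[OF nm] by blast
    qed
  qed
qed

lemma hi_par: "hi (x, y) = (hi (0,0) \<noteq> odd (x + y))"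
proof -
  have e1: "hi (x' + 1, y') = (\<not> hi (x', y'))" for x' y'
    using hi_e1[of "(x', y')"] unfolding vadd_def by simp
  have e2: "hi (x', y' + 1) = (\<not> hi (x', y'))" for x' y'
    using hi_e2[of "(x', y')"] unfolding vadd_def by simp
  have 1: "hi (x, y) = (hi (0, y) \<noteq> odd x)"
    by (rule parity_int[of "\<lambda>x. hi (x, y)", OF e1])
  have 2: "hi (0, y) = (hi (0, 0) \<noteq> odd y)"
    by (rule parity_int[of "\<lambda>y. hi (0, y)", OF e2])
  show ?thesis unfolding 1 2 by auto
qed

lemma hi_nb:
  assumes "hi h" "j \<in> {1..4}"
  shows "T (vadd h (u j)) = T (vadd h (1,0))"
proof -
  have "T (vadd h (u 2)) = T (vadd h (u 1))" using hiL[OF assms(1), of 1] by (simp add: u_simps)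
  moreover have "T (vadd h (u 3)) = T (vadd h (u 2))" using hiL[OF assms(1), of 2] by (simp add: u_simps)
  moreover have "T (vadd h (u 4)) = T (vadd h (u 3))" using hiL[OF assms(1), of 3] by (simp add: u_simps)
  moreover have "j = 1 \<or> j = 2 \<or> j = 3 \<or> j = 4" using assms(2) by auto
  ultimately show ?thesis by (auto simp: u_simps)
qed

lemma backward: "domino_solvable {1..int m} R1 R2"
proof -
  define h0 :: cell where "h0 = (if hi (0,0) then (0,0) else (1,0))"
  have hh0: "hi h0" using hi_e1[of "(0,0)"] unfolding h0_def vadd_def by auto
  define ph :: "cell \<Rightarrow> cell" where "ph = (\<lambda>p. (fst h0 + fst p - snd p, snd h0 - fst p - snd p))"
  have hiph: "hi (ph p)" for p
  proof -
    have "fst (ph p) + snd (ph p) = (fst h0 + snd h0) - 2 * snd p" unfolding ph_def by simp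
    then have "odd (fst (ph p) + snd (ph p)) = odd (fst h0 + snd h0)" by simp
    then show ?thesis using hi_par[of "fst (ph p)" "snd (ph p)"] hi_par[of "fst h0" "snd h0"] hh0 by simp
  qed
  define D where "D = (\<lambda>h. (T h - T (vadd h (1,0))) mod int n)"
  define T0 where "T0 = (\<lambda>p. D (ph p))"
  have range: "T0 p \<in> {1..int m}" for p
    using hiL[OF hiph[of p], of 1] unfolding T0_def D_def ab_def by (simp add: u_simps)
  have rel: "(T0 p, T0 (vadd p (1,0))) \<in> R1 \<and> (T0 p, T0 (vadd p (0,1))) \<in> R2" for p
  proof -
    define h where "h = ph p"
    define h1 where "h1 = ph (vadd p (1,0))"
    define h2 where "h2 = ph (vadd p (0,1))"
    define s where "s = vadd h (0,-1)"
    have hs: "vadd s (0,1) = h" "vadd s (1,0) = h1" "vadd s (-1,0) = h2"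
      unfolding s_def h_def h1_def h2_def ph_def vadd_def by simp_all
    have lo: "\<not> hi s" using hi_e2[of s] hs hiph[of p] h_def by simp
    have t1: "T s = T (vadd h (1,0))" using hi_nb[OF hiph[of p], of 4] unfolding h_def s_def by (simp add: u_simps)
    have t2: "T s = T (vadd h1 (1,0))"
    proof -
      have "vadd h1 (-1,0) = s" unfolding s_def h_def h1_def ph_def vadd_def by simp
      then show ?thesis using hi_nb[OF hiph[of "vadd p (1,0)"], of 3] unfolding h1_def by (simp add: u_simps)
    qed
    have t3: "T s = T (vadd h2 (1,0))"
    proof -
      have "vadd h2 (1,0) = s" unfolding s_def h_def h2_def ph_def vadd_def by simp
      then show ?thesis by simp
    qed
    have k1: "(0, (T h1 - T s) mod int n, (T h - T s) mod int n) \<in> Kset m R1 R2 1"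
      using conjunct1[OF loR[OF lo, of 1]] hs by (simp add: u_simps)
    have k2: "(0, (T h - T s) mod int n, (T h2 - T s) mod int n) \<in> Kset m R1 R2 2"
      using conjunct1[OF loR[OF lo, of 2]] hs by (simp add: u_simps)
    have "((T h - T s) mod int n, (T h1 - T s) mod int n) \<in> R1"
      using k1 unfolding Kset_def Lset_def by auto
    moreover have "((T h - T s) mod int n, (T h2 - T s) mod int n) \<in> R2"
      using k2 unfolding Kset_def Lset_def by auto
    ultimately show ?thesis using t1 t2 t3 unfolding T0_def D_def h_def h1_def h2_def by simp
  qed
  show ?thesis unfolding domino_solvable_def using range rel by blast
qed

end

lemma memL:
  assumes "w \<in> {1..int m}" "2*m+1 \<le> n" "i \<in> {1..4}"
  shows "(w, 0, 0) \<in> Sset n m R1 R2 i"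
proof -
  have w: "w mod int n = w" using assms by auto
  have "(w, 0, 0) \<in> Kset m R1 R2 i" using assms(1) unfolding Kset_def Lset_def by auto
  then have "\<exists>a b c k. (w, 0, 0) = ((a + k) mod int n, (b + k) mod int n, (c + k) mod int n) \<and>
        (a,b,c) \<in> Kset m R1 R2 i \<and> k \<in> {0..<int n}"
    using w assms(2) by (intro exI[of _ w] exI[of _ 0]) auto
  then show ?thesis unfolding Sset_def idx[OF assms(3)] by blast
qed

lemma memR:
  assumes "(0, a, b) \<in> Kset m R1 R2 i" "0 \<le> a" "a < int n" "0 \<le> b" "b < int n" "i \<in> {1..4}"
  shows "(0, a, b) \<in> Sset n m R1 R2 i"
proof -
  have "\<exists>a' b' c k. (0, a, b) = ((a' + k) mod int n, (b' + k) mod int n, (c + k) mod int n) \<and>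
        (a',b',c) \<in> Kset m R1 R2 i \<and> k \<in> {0..<int n}"
    using assms by (intro exI[of _ 0] exI[of _ a] exI[of _ b]) auto
  then show ?thesis unfolding Sset_def idx[OF assms(6)] by blast
qed

lemma forward:
  assumes nm: "2*m+1 \<le> n" and D: "domino_solvable {1..int m} R1 R2"
  shows "cyclic_triomino_solvable n (Sset n m R1 R2)"
proof -
  obtain T0 :: "cell \<Rightarrow> int" where T0r: "\<And>s. T0 s \<in> {1..int m}"
    and T0R: "\<And>s. (T0 s, T0 (vadd s (1,0))) \<in> R1 \<and> (T0 s, T0 (vadd s (0,1))) \<in> R2"
    using D unfolding domino_solvable_def by blast
  define ps :: "int \<Rightarrow> int \<Rightarrow> cell" where "ps = (\<lambda>x y. ((x - y - 1) div 2, (1 - x - y) div 2))"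
  define T :: "cell \<Rightarrow> int" where "T = (\<lambda>s. if even (fst s + snd s) then 0 else T0 (ps (fst s) (snd s)))"
  have rng: "0 \<le> T0 q" "T0 q < int n" for q using T0r[of q] nm by auto
  have Tr: "T s \<in> {0..<int n}" for s unfolding T_def using rng nm by auto
  have key: "(T (x,y), T (vadd (x,y) (u i)), T (vadd (x,y) (u (Suc i)))) \<in> Sset n m R1 R2 i"
    if i: "i \<in> {1..4}" for x y i
  proof (cases "even (x + y)")
    case False
    have uo: "odd (fst (u j) + snd (u j))" for j unfolding u_def by auto
    have z: "T (vadd (x,y) (u j)) = 0" for j
      using uo[of j] False unfolding T_def vadd_def by auto
    show ?thesis unfolding z using memL[OF T0r nm i] False unfolding T_def by simp
  next
    case True
    have T00: "T (x,y) = 0" using True unfolding T_def by simp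
    have i4: "i = 1 \<or> i = 2 \<or> i = 3 \<or> i = 4" using i by auto
    have K: "(0, T (vadd (x,y) (u i)), T (vadd (x,y) (u (Suc i)))) \<in> Kset m R1 R2 i"
      using i4
    proof (elim disjE)
      assume h: "i = 1"
      have e: "vadd (ps x (y+1)) (1,0) = ps (x+1) y" unfolding ps_def vadd_def using True by (auto; presburger)
      show ?thesis using T0R[of "ps x (y+1)", unfolded e] True unfolding h T_def vadd_def Kset_def
        by (simp add: u_simps)
    next
      assume h: "i = 2"
      have e: "vadd (ps x (y+1)) (0,1) = ps (x-1) y" unfolding ps_def vadd_def using True by (auto; presburger)
      show ?thesis using T0R[of "ps x (y+1)", unfolded e] True unfolding h T_def vadd_def Kset_def
        by (simp add: u_simps)
    next
      assume h: "i = 3"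
      have e: "vadd (ps (x-1) y) (1,0) = ps x (y-1)" unfolding ps_def vadd_def using True by (auto; presburger)
      show ?thesis using T0R[of "ps (x-1) y", unfolded e] True unfolding h T_def vadd_def Kset_def
        by (simp add: u_simps)
    next
      assume h: "i = 4"
      have e: "vadd (ps (x+1) y) (0,1) = ps x (y-1)" unfolding ps_def vadd_def using True by (auto; presburger)
      show ?thesis using T0R[of "ps (x+1) y", unfolded e] True unfolding h T_def vadd_def Kset_def
        by (simp add: u_simps)
    qed
    show ?thesis unfolding T00 using memR[OF K _ _ _ _ i] Tr by auto
  qed
  show ?thesis unfolding cyclic_triomino_solvable_def
    using Tr key by (intro exI[of _ T]) auto
qed

theorem lemma3p5:
  fixes m n :: nat and R1 R2 :: "(int \<times> int) set"
  assumes "m \<ge> 1"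
    and "R1 \<subseteq> {1..int m} \<times> {1..int m}"
    and "R2 \<subseteq> {1..int m} \<times> {1..int m}"
    and "n \<ge> 2 * m + 1"
  shows "cyclic_triomino_solvable n (Sset n m R1 R2) \<longleftrightarrow> domino_solvable {1..int m} R1 R2"
proof
  assume "cyclic_triomino_solvable n (Sset n m R1 R2)"
  then obtain T :: "cell \<Rightarrow> int" where "\<forall>s. T s \<in> {0..<int n}"
    "\<forall>s. \<forall>i\<in>{1..4}. (T s, T (vadd s (u i)), T (vadd s (u (Suc i)))) \<in> Sset n m R1 R2 i"
    unfolding cyclic_triomino_solvable_def by blast
  then show "domino_solvable {1..int m} R1 R2" using backward[OF assms(2,3,4)] by blast
next
  assume "domino_solvable {1..int m} R1 R2"
  then show "cyclic_triomino_solvable n (Sset n m R1 R2)" using forward assms(4) by blast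
qed

end
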